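(* Let $X$, $Y$ be disjoint sets of cardinality at least two, $M\le\mathrm{Sym}(X)$ and $N\le\mathrm{Sym}(Y)$ nontrivial permutation groups, $T$ the $(|X|,|Y|)$-biregular tree and $c$ a legal colouring. Suppose $v_1,v_2\in V_X$ and $w_1,w_2\in V_Y$, with $\{v_1,w_1\}$ and $\{v_2,w_2\}$ edges of $T$. Then these two edges lie in the same orbit of $U_c(M,N)$ if and only if $v_1,v_2$ lie in the same orbit of $U_c(M,N)$ and $w_1,w_2$ lie in the same orbit of $U_c(M,N)$.
   Context: $T$ has natural bipartition $VT=V_X\sqcup V_Y$ (vertices in $V_X$ have valency $|X|$, in $V_Y$ valency $|Y|$). $A(v)$, $\overline{A}(v)$ are the sets of arcs with origin, resp. terminus, $v$. A legal colouring is a map $c:AT\to X\cup Y$ restricting to a bijection $A(v)\to X$ for $v\in V_X$, to a bijection $A(v)\to Y$ for $v\in V_Y$, and constant on each $\overline{A}(v)$. $U_c(M,N)$ is the group of $g\in\mathrm{Aut}(T)$ with $gV_X=V_X$ and $c|_{A(gv)}\circ g|_{A(v)}\circ(c|_{A(v)})^{-1}$ in $M$ for $v\in V_X$ and in $N$ for $v\in V_Y$. *)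

theory Defs
  imports "HOL-Combinatorics.Permutations"
begin

definition simple_graph :: "('v \<Rightarrow> 'v \<Rightarrow> bool) \<Rightarrow> bool" where
  "simple_graph E \<longleftrightarrow> (\<forall>u v. E u v \<longrightarrow> E v u) \<and> (\<forall>u. \<not> E u u)"

definition is_walk :: "('v \<Rightarrow> 'v \<Rightarrow> bool) \<Rightarrow> 'v list \<Rightarrow> bool" where
  "is_walk E xs \<longleftrightarrow> xs \<noteq> [] \<and> (\<forall>i. Suc i < length xs \<longrightarrow> E (xs ! i) (xs ! Suc i))"

definition connected_graph :: "('v \<Rightarrow> 'v \<Rightarrow> bool) \<Rightarrow> bool" where
  "connected_graph E \<longleftrightarrow> (\<forall>u v. \<exists>xs. is_walk E xs \<and> hd xs = u \<and> last xs = v)"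

definition has_cycle :: "('v \<Rightarrow> 'v \<Rightarrow> bool) \<Rightarrow> bool" where
  "has_cycle E \<longleftrightarrow> (\<exists>xs. is_walk E xs \<and> distinct xs \<and> 3 \<le> length xs \<and> E (last xs) (hd xs))"

definition is_tree :: "('v \<Rightarrow> 'v \<Rightarrow> bool) \<Rightarrow> bool" where
  "is_tree E \<longleftrightarrow> simple_graph E \<and> connected_graph E \<and> \<not> has_cycle E"

definition arcs :: "('v \<Rightarrow> 'v \<Rightarrow> bool) \<Rightarrow> ('v \<times> 'v) set" where
  "arcs E = {(u, w). E u w}"

definition out_arcs :: "('v \<Rightarrow> 'v \<Rightarrow> bool) \<Rightarrow> 'v \<Rightarrow> ('v \<times> 'v) set" where
  "out_arcs E v = {(v, w) | w. E v w}"

definition in_arcs :: "('v \<Rightarrow> 'v \<Rightarrow> bool) \<Rightarrow> 'v \<Rightarrow> ('v \<times> 'v) set" where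
  "in_arcs E v = {(u, v) | u. E u v}"

definition is_aut :: "('v \<Rightarrow> 'v \<Rightarrow> bool) \<Rightarrow> ('v \<Rightarrow> 'v) \<Rightarrow> bool" where
  "is_aut E g \<longleftrightarrow> bij g \<and> (\<forall>u w. E u w \<longleftrightarrow> E (g u) (g w))"

definition arc_map :: "('v \<Rightarrow> 'v) \<Rightarrow> 'v \<times> 'v \<Rightarrow> 'v \<times> 'v" where
  "arc_map g a = (g (fst a), g (snd a))"

definition legal_colouring ::
  "('v \<Rightarrow> 'v \<Rightarrow> bool) \<Rightarrow> 'v set \<Rightarrow> 'v set \<Rightarrow> 'a set \<Rightarrow> 'a set \<Rightarrow> ('v \<times> 'v \<Rightarrow> 'a) \<Rightarrow> bool" where
  "legal_colouring E VX VY X Y c \<longleftrightarrow>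
     (\<forall>v\<in>VX. bij_betw c (out_arcs E v) X) \<and>
     (\<forall>v\<in>VY. bij_betw c (out_arcs E v) Y) \<and>
     (\<forall>v. \<forall>a\<in>in_arcs E v. \<forall>b\<in>in_arcs E v. c a = c b)"

text \<open>The local action c|A(gv) o g|A(v) o (c|A(v))^{-1} as a permutation of the colour set S
  (extended by the identity outside S, the convention of permutes).\<close>
definition local_action ::
  "('v \<Rightarrow> 'v \<Rightarrow> bool) \<Rightarrow> ('v \<times> 'v \<Rightarrow> 'a) \<Rightarrow> 'a set \<Rightarrow> ('v \<Rightarrow> 'v) \<Rightarrow> 'v \<Rightarrow> 'a \<Rightarrow> 'a" where
  "local_action E c S g v = (\<lambda>x. if x \<in> S then c (arc_map g (inv_into (out_arcs E v) c x)) else x)"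

definition U_c ::
  "('v \<Rightarrow> 'v \<Rightarrow> bool) \<Rightarrow> 'v set \<Rightarrow> 'v set \<Rightarrow> 'a set \<Rightarrow> 'a set \<Rightarrow> ('v \<times> 'v \<Rightarrow> 'a)
    \<Rightarrow> ('a \<Rightarrow> 'a) set \<Rightarrow> ('a \<Rightarrow> 'a) set \<Rightarrow> ('v \<Rightarrow> 'v) set" where
  "U_c E VX VY X Y c M N = {g. is_aut E g \<and> g ` VX = VX \<and>
      (\<forall>v\<in>VX. local_action E c X g v \<in> M) \<and>
      (\<forall>v\<in>VY. local_action E c Y g v \<in> N)}"

definition perm_group_on :: "'a set \<Rightarrow> ('a \<Rightarrow> 'a) set \<Rightarrow> bool" where
  "perm_group_on S G \<longleftrightarrow> (\<forall>p\<in>G. p permutes S) \<and> id \<in> G \<and>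
     (\<forall>p\<in>G. \<forall>q\<in>G. p \<circ> q \<in> G) \<and> (\<forall>p\<in>G. inv p \<in> G)"

end

theory Submission
  imports Defs
begin

locale tree_col =
  fixes E :: "'v \<Rightarrow> 'v \<Rightarrow> bool" and VX VY :: "'v set" and X Y :: "'a set"
    and c :: "'v \<times> 'v \<Rightarrow> 'a"
  assumes XY: "X \<inter> Y = {}"
    and tree: "is_tree E"
    and VXY1: "VX \<inter> VY = {}" and VXY2: "VX \<union> VY = UNIV"
    and bip: "\<And>u w. E u w \<Longrightarrow> (u \<in> VX \<and> w \<in> VY) \<or> (u \<in> VY \<and> w \<in> VX)"
    and lc: "legal_colouring E VX VY X Y c"
begin

lemma symE: "E u w \<Longrightarrow> E w u"
  using tree unfolding is_tree_def simple_graph_def by blast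

lemma noloop: "\<not> E u u"
  using tree unfolding is_tree_def simple_graph_def by blast

lemma nocyc: "\<not> has_cycle E"
  using tree unfolding is_tree_def by blast

lemma conn: "connected_graph E"
  using tree unfolding is_tree_def by blast

definition colset :: "'v \<Rightarrow> 'a set" where
  "colset u = (if u \<in> VX then X else Y)"

lemma out_bij: "bij_betw c (out_arcs E u) (colset u)"
proof (cases "u \<in> VX")
  case True thus ?thesis using lc unfolding legal_colouring_def colset_def by auto
next
  case False
  then have "u \<in> VY" using VXY2 by blast
  thus ?thesis using lc False unfolding legal_colouring_def colset_def by auto
qed

lemma col_in: "E u w \<Longrightarrow> c (u, w) \<in> colset u"
  using out_bij[of u] unfolding bij_betw_def out_arcs_def by auto

lemma col_inj: "E u w \<Longrightarrow> E u w' \<Longrightarrow> c (u, w) = c (u, w') \<Longrightarrow> w = w'"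
  using bij_betw_imp_inj_on[OF out_bij[of u]] unfolding inj_on_def out_arcs_def by auto

lemma nb_ex: "x \<in> colset u \<Longrightarrow> \<exists>w. E u w \<and> c (u, w) = x"
proof -
  assume "x \<in> colset u"
  then have "x \<in> c ` out_arcs E u" using out_bij[of u] unfolding bij_betw_def by simp
  then obtain a where "a \<in> out_arcs E u" "x = c a" by blast
  thus ?thesis unfolding out_arcs_def by blast
qed

lemma incol: "E u w \<Longrightarrow> E u' w \<Longrightarrow> c (u', w) = c (u, w)"
  using lc unfolding legal_colouring_def in_arcs_def by blast

lemma part_flip: "E u w \<Longrightarrow> (w \<in> VX \<longleftrightarrow> u \<notin> VX)"
  using bip[of u w] VXY1 by blast

lemma colset_VY: "u \<notin> VX \<Longrightarrow> colset u = Y"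
  unfolding colset_def by simp

definition nb :: "'v \<Rightarrow> 'a \<Rightarrow> 'v" where
  "nb u x = (SOME w. E u w \<and> c (u, w) = x)"

lemma nb_prop: "x \<in> colset u \<Longrightarrow> E u (nb u x) \<and> c (u, nb u x) = x"
  unfolding nb_def by (rule someI_ex, rule nb_ex)

lemma nb_eq: "E u w \<Longrightarrow> c (u, w) = x \<Longrightarrow> nb u x = w"
  using nb_prop[of x u] col_in[of u w] col_inj by blast

fun wf :: "'v \<Rightarrow> 'v list \<Rightarrow> bool" where
  "wf a [] = True"
| "wf a (x # xs) = (E a x \<and> wf x xs)"

lemma wf_append: "wf a (ys @ zs) \<longleftrightarrow> wf a ys \<and> wf (last (a # ys)) zs"
  by (induction ys arbitrary: a) auto

lemma wf_is_walk: "wf a xs \<longleftrightarrow> is_walk E (a # xs)"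
proof (induction xs arbitrary: a)
  case Nil
  then show ?case by (simp add: is_walk_def)
next
  case (Cons x xs)
  have "is_walk E (a # x # xs) \<longleftrightarrow> E a x \<and> is_walk E (x # xs)"
  proof
    assume h: "is_walk E (a # x # xs)"
    have h2: "\<forall>i. Suc i < length (a # x # xs) \<longrightarrow> E ((a # x # xs) ! i) ((a # x # xs) ! Suc i)"
      using h unfolding is_walk_def by blast
    have "E ((a # x # xs) ! 0) ((a # x # xs) ! Suc 0)" by (rule h2[rule_format]) simp
    then have "E a x" by simp
    moreover have "is_walk E (x # xs)" unfolding is_walk_def
    proof (intro conjI allI impI)
      fix i assume "Suc i < length (x # xs)"
      then have "Suc (Suc i) < length (a # x # xs)" by simp
      then have "E ((a # x # xs) ! Suc i) ((a # x # xs) ! Suc (Suc i))" by (rule h2[rule_format])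
      then show "E ((x # xs) ! i) ((x # xs) ! Suc i)" by simp
    qed simp
    ultimately show "E a x \<and> is_walk E (x # xs)" by blast
  next
    assume h: "E a x \<and> is_walk E (x # xs)"
    show "is_walk E (a # x # xs)" unfolding is_walk_def
    proof (intro conjI allI impI)
      fix i assume i: "Suc i < length (a # x # xs)"
      show "E ((a # x # xs) ! i) ((a # x # xs) ! Suc i)"
      proof (cases i)
        case 0 then show ?thesis using h by simp
      next
        case (Suc j)
        then have "Suc j < length (x # xs)" using i by simp
        then show ?thesis using h Suc unfolding is_walk_def by simp
      qed
    qed simp
  qed
  then show ?case using Cons by simp
qed

lemma wf_rev: "wf a xs \<Longrightarrow> wf (last (a # xs)) (rev (butlast (a # xs)))"
proof (induction xs rule: rev_induct)
  case Nil
  then show ?case by simp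
next
  case (snoc y ys)
  have h: "wf a ys" "E (last (a # ys)) y" using snoc.prems by (auto simp: wf_append)
  have r: "rev (a # ys) = last (a # ys) # rev (butlast (a # ys))"
    by (metis append_butlast_last_id list.distinct(1) rev.simps(2) rev_rev_ident)
  have "wf y (rev (a # ys))" using r snoc.IH[OF h(1)] h(2) symE by (metis wf.simps(2))
  then show ?case by (simp add: butlast_append)
qed

lemma walk_induct:
  assumes "wf a p" "P a" "\<And>u w. P u \<Longrightarrow> E u w \<Longrightarrow> P w"
  shows "P (last (a # p))"
  using assms(1,2)
proof (induction p arbitrary: a)
  case Nil then show ?case by simp
next
  case (Cons x xs)
  then have "P x" using assms(3) by auto
  then show ?case using Cons by auto
qed

lemma conn_walk: "\<exists>p. wf v0 p \<and> last (v0 # p) = u"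
proof -
  obtain xs where xs: "is_walk E xs" "hd xs = v0" "last xs = u"
    using conn unfolding connected_graph_def by blast
  then have "xs = v0 # tl xs" unfolding is_walk_def by (metis list.collapse)
  then show ?thesis using xs wf_is_walk by metis
qed

definition good :: "('a \<Rightarrow> 'a) \<Rightarrow> 'v \<times> 'v \<Rightarrow> bool" where
  "good m s \<longleftrightarrow> (fst s \<in> VX \<longleftrightarrow> snd s \<in> VX) \<and>
     (\<forall>u u'. E u (fst s) \<longrightarrow> E u' (snd s) \<longrightarrow> c (u', snd s) = m (c (u, fst s)))"

definition step :: "('a \<Rightarrow> 'a) \<Rightarrow> 'v \<times> 'v \<Rightarrow> 'v \<Rightarrow> 'v \<times> 'v" where
  "step m s x = (x, nb (snd s) (m (c (fst s, x))))"

definition run :: "('a \<Rightarrow> 'a) \<Rightarrow> 'v \<times> 'v \<Rightarrow> 'v list \<Rightarrow> 'v \<times> 'v" where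
  "run m s xs = foldl (step m) s xs"

lemma run_Nil[simp]: "run m s [] = s" by (simp add: run_def)
lemma run_Cons[simp]: "run m s (x # xs) = run m (step m s x) xs" by (simp add: run_def)
lemma run_append: "run m s (xs @ ys) = run m (run m s xs) ys" by (simp add: run_def)

lemma m_colset: "m permutes X \<Longrightarrow> x \<in> colset u \<Longrightarrow> m x \<in> colset u"
  unfolding colset_def using XY permutes_in_image[of m X x] permutes_not_in[of m X x]
  by (auto split: if_splits)

lemma m_Y: "m permutes X \<Longrightarrow> x \<in> Y \<Longrightarrow> m x = x"
  using XY permutes_not_in[of m X x] by blast

lemma step_good:
  assumes m: "m permutes X" and g: "good m s" and e: "E (fst s) x"
  shows "good m (step m s x) \<and> E (snd s) (snd (step m s x)) \<and>
         c (snd s, snd (step m s x)) = m (c (fst s, x))"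
proof -
  obtain a b where s: "s = (a, b)" by (cases s)
  have ab: "colset a = colset b" using g s unfolding good_def colset_def by simp
  have col: "m (c (a, x)) \<in> colset b" using m_colset[OF m col_in[of a x]] e s ab by simp
  define b1 where "b1 = nb b (m (c (a, x)))"
  have b1: "E b b1" "c (b, b1) = m (c (a, x))" using nb_prop[OF col] b1_def by auto
  have "good m (x, b1)" unfolding good_def
  proof (intro conjI allI impI)
    show "(fst (x, b1) \<in> VX) = (snd (x, b1) \<in> VX)"
      using part_flip[OF b1(1)] part_flip[of a x] e s g unfolding good_def by simp
  next
    fix u u' assume "E u (fst (x, b1))" "E u' (snd (x, b1))"
    then show "c (u', snd (x, b1)) = m (c (u, fst (x, b1)))"
      using incol[of b b1 u'] incol[of a x u] b1 e s by simp
  qed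
  then show ?thesis using s b1 b1_def by (simp add: step_def)
qed

lemma run_good:
  "m permutes X \<Longrightarrow> good m s \<Longrightarrow> wf (fst s) xs \<Longrightarrow>
     good m (run m s xs) \<and> fst (run m s xs) = last (fst s # xs)"
proof (induction xs arbitrary: s)
  case Nil then show ?case by simp
next
  case (Cons x xs)
  have "good m (step m s x)" using step_good Cons.prems by auto
  moreover have "fst (step m s x) = x" by (simp add: step_def)
  ultimately show ?case using Cons by auto
qed

lemma back_step:
  assumes m: "m permutes X" and g: "good m s" and e: "E (fst s) x"
  shows "step m (step m s x) (fst s) = s"
proof -
  obtain a b where s: "s = (a, b)" by (cases s)
  define b1 where "b1 = snd (step m s x)"
  have st: "step m s x = (x, b1)" using b1_def by (simp add: step_def)
  have b1: "E b b1" using step_good[OF m g e] s b1_def by simp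
  have "c (b1, b) = m (c (x, a))" using g s symE[OF b1] symE e unfolding good_def by auto
  then have "nb b1 (m (c (x, a))) = b" using nb_eq symE[OF b1] by blast
  then show ?thesis using st s by (simp add: step_def)
qed

lemma cycle_from:
  assumes w: "is_walk E L" and nbt: "\<forall>i. i + 2 < length L \<longrightarrow> L ! i \<noteq> L ! (i + 2)"
  shows "i < j \<Longrightarrow> j < length L \<Longrightarrow> L ! i = L ! j \<Longrightarrow> False"
proof (induction "j - i" arbitrary: i j rule: less_induct)
  case less
  have wE: "\<And>t. Suc t < length L \<Longrightarrow> E (L ! t) (L ! Suc t)" using w unfolding is_walk_def by blast
  show False
  proof (cases "\<exists>p q. i \<le> p \<and> p < q \<and> q \<le> j \<and> q - p < j - i \<and> L ! p = L ! q")
    case True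
    then obtain p q where "i \<le> p" "p < q" "q \<le> j" "q - p < j - i" "L ! p = L ! q" by blast
    moreover have "q < length L" using \<open>q \<le> j\<close> less.prems by simp
    ultimately show False using less.hyps[of q p] by blast
  next
    case False
    define C where "C = take (j - i) (drop i L)"
    have len: "length C = j - i" using less.prems unfolding C_def by simp
    have nth: "\<And>t. t < j - i \<Longrightarrow> C ! t = L ! (i + t)" using less.prems unfolding C_def by simp
    have key: "\<And>t1 t2. t1 < t2 \<Longrightarrow> t2 < j - i \<Longrightarrow> C ! t1 = C ! t2 \<Longrightarrow> False"
    proof -
      fix t1 t2 assume t: "t1 < t2" "t2 < j - i" "C ! t1 = C ! t2"
      then have eq: "L ! (i + t1) = L ! (i + t2)" using nth by simp
      from False have "\<not> (i \<le> i + t1 \<and> i + t1 < i + t2 \<and> i + t2 \<le> j \<and> (i + t2) - (i + t1) < j - i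
            \<and> L ! (i + t1) = L ! (i + t2))" by blast
      moreover have "i + t2 \<le> j" "t2 - t1 < j - i" using t by arith+
      ultimately show False using t eq by simp
    qed
    have dist: "distinct C" unfolding distinct_conv_nth
    proof (intro allI impI)
      fix t1 t2 assume t: "t1 < length C" "t2 < length C" "t1 \<noteq> t2"
      show "C ! t1 \<noteq> C ! t2"
      proof
        assume eq: "C ! t1 = C ! t2"
        show False
        proof (cases "t1 < t2")
          case True
          then show False using key[of t1 t2] eq t len by simp
        next
          case False2: False
          then have "t2 < t1" using t by simp
          then show False using key[of t2 t1] eq t len by simp
        qed
      qed
    qed
    have ge3: "3 \<le> j - i"
    proof (rule ccontr)
      assume "\<not> 3 \<le> j - i"
      then have "j = Suc i \<or> j = i + 2" using less.prems by auto
      then show False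
      proof
        assume "j = Suc i"
        then show False using wE[of i] less.prems noloop by auto
      next
        assume "j = i + 2"
        then show False using nbt less.prems by auto
      qed
    qed
    have walkC: "is_walk E C" unfolding is_walk_def
    proof (intro conjI allI impI)
      show "C \<noteq> []" using len ge3 by auto
    next
      fix t assume "Suc t < length C"
      then show "E (C ! t) (C ! Suc t)" using nth len wE[of "i + t"] less.prems by simp
    qed
    have "C \<noteq> []" using len ge3 by auto
    then have "last C = C ! (j - i - 1)" using last_conv_nth[of C] len by simp
    also have "\<dots> = L ! (i + (j - i - 1))" using nth ge3 by simp
    also have "i + (j - i - 1) = j - 1" using ge3 by simp
    finally have "last C = L ! (j - 1)" .
    moreover have "hd C = L ! j"
    proof -
      have "hd C = C ! 0" using hd_conv_nth[OF \<open>C \<noteq> []\<close>] .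
      also have "\<dots> = L ! i" using nth[of 0] ge3 by simp
      finally show ?thesis using less.prems by simp
    qed
    moreover have "E (L ! (j - 1)) (L ! j)" using wE[of "j - 1"] less.prems by simp
    ultimately have "has_cycle E" unfolding has_cycle_def using walkC dist ge3 len by metis
    then show False using nocyc by blast
  qed
qed

lemma closed_bt:
  assumes w: "wf a xs" and ne: "xs \<noteq> []" and cl: "last xs = a"
  shows "\<exists>ys x zs. xs = ys @ x # last (a # ys) # zs"
proof (rule ccontr)
  assume nex: "\<not> ?thesis"
  define L where "L = a # xs"
  have wL: "is_walk E L" using w wf_is_walk L_def by simp
  have nbt: "\<forall>i. i + 2 < length L \<longrightarrow> L ! i \<noteq> L ! (i + 2)"
  proof (intro allI impI notI)
    fix i assume i: "i + 2 < length L" and eq: "L ! i = L ! (i + 2)"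
    have i1: "Suc i < length xs" using i L_def by simp
    have "xs = take i xs @ drop i xs" by simp
    also have "drop i xs = xs ! i # drop (Suc i) xs" using i1 by (simp add: Cons_nth_drop_Suc)
    also have "drop (Suc i) xs = xs ! Suc i # drop (Suc (Suc i)) xs" using i1 by (simp add: Cons_nth_drop_Suc)
    finally have d: "xs = take i xs @ xs ! i # xs ! Suc i # drop (Suc (Suc i)) xs" .
    have "a # take i xs = take (Suc i) L" using L_def by simp
    also have "\<dots> = take i L @ [L ! i]" using i by (simp add: take_Suc_conv_app_nth)
    finally have "last (a # take i xs) = L ! i" by (metis last_snoc)
    also have "\<dots> = xs ! Suc i" using eq L_def by simp
    finally show False using nex d by metis
  qed
  have "L ! 0 = L ! length xs" using cl ne L_def by (simp add: last_conv_nth)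
  then show False using cycle_from[OF wL nbt, of 0 "length xs"] ne L_def by simp
qed

lemma closed_run:
  assumes m: "m permutes X"
  shows "good m s \<Longrightarrow> wf (fst s) xs \<Longrightarrow> last (fst s # xs) = fst s \<Longrightarrow> run m s xs = s"
proof (induction "length xs" arbitrary: xs rule: less_induct)
  case less
  show ?case
  proof (cases "xs = []")
    case True then show ?thesis by simp
  next
    case False
    obtain a b where s: "s = (a, b)" by (cases s)
    have "last xs = a" using less.prems False s by simp
    then obtain ys x zs where d: "xs = ys @ x # last (a # ys) # zs"
      using closed_bt less.prems False s by fastforce
    define u where "u = last (a # ys)"
    have wys: "wf a ys" and ex: "E u x" and wz: "wf u zs"
      using less.prems(2) d s u_def by (auto simp: wf_append)
    have r: "good m (run m s ys) \<and> fst (run m s ys) = u"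
      using run_good[OF m less.prems(1)] wys s u_def by simp
    have "run m s xs = run m (step m (step m (run m s ys) x) u) zs"
      using d u_def by (simp add: run_append)
    also have "step m (step m (run m s ys) x) u = run m s ys"
      using back_step[OF m, of "run m s ys" x] r ex by simp
    also have "run m (run m s ys) zs = run m s (ys @ zs)" by (simp add: run_append)
    finally have eq: "run m s xs = run m s (ys @ zs)" .
    have "run m s (ys @ zs) = s"
    proof (rule less.hyps)
      show "length (ys @ zs) < length xs" using d by simp
      show "good m s" by fact
      show "wf (fst s) (ys @ zs)" using wys wz s u_def by (simp add: wf_append)
      show "last (fst s # ys @ zs) = fst s"
        using less.prems(3) d s u_def by (cases zs) (auto)
    qed
    then show ?thesis using eq by simp
  qed
qed

lemma last_app: "last (x # p @ b) = last (last (x # p) # b)"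
  by (cases b) auto

lemma rev_last_butlast: "rev (a # ys) = last (a # ys) # rev (butlast (a # ys))"
  by (metis append_butlast_last_id list.distinct(1) rev.simps(2) rev_rev_ident)

lemma run_unique:
  assumes m: "m permutes X" and g: "good m (v0, v0)"
    and p: "wf v0 p" and q: "wf v0 q" and l: "last (v0 # p) = last (v0 # q)"
  shows "run m (v0, v0) p = run m (v0, v0) q"
proof -
  define a where "a = last (v0 # q)"
  define bk where "bk = rev (butlast (v0 # q))"
  have wb: "wf a bk" using wf_rev[OF q] a_def bk_def by simp
  have lb: "last (a # bk) = v0"
    using rev_last_butlast[of v0 q] a_def bk_def by (metis last_rev list.sel(1))
  have c1: "run m (v0, v0) (p @ bk) = (v0, v0)"
  proof (rule closed_run[OF m g])
    show "wf (fst (v0, v0)) (p @ bk)" using p wb l a_def by (simp add: wf_append)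
    have "last (v0 # p @ bk) = last (a # bk)" using last_app[of v0 p bk] l a_def by metis
    then show "last (fst (v0, v0) # p @ bk) = fst (v0, v0)" using lb by simp
  qed
  have rp: "good m (run m (v0, v0) p) \<and> fst (run m (v0, v0) p) = a"
    using run_good[OF m g] p l a_def by simp
  have c2: "run m (run m (v0, v0) p) (bk @ q) = run m (v0, v0) p"
  proof (rule closed_run[OF m])
    show "good m (run m (v0, v0) p)" using rp by simp
    show "wf (fst (run m (v0, v0) p)) (bk @ q)" using rp wb lb q by (simp add: wf_append)
    show "last (fst (run m (v0, v0) p) # bk @ q) = fst (run m (v0, v0) p)"
    proof -
      have "last (a # bk @ q) = last (v0 # q)" using last_app[of a bk q] lb by metis
      then show ?thesis using rp a_def by simp
    qed
  qed
  have "run m (v0, v0) p = run m (v0, v0) (p @ bk @ q)" using c2 by (simp add: run_append)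
  also have "\<dots> = run m (v0, v0) ((p @ bk) @ q)" by simp
  also have "\<dots> = run m (v0, v0) q" using c1 by (simp only: run_append)
  finally show ?thesis .
qed

definition kmap :: "('a \<Rightarrow> 'a) \<Rightarrow> 'v \<Rightarrow> 'v \<Rightarrow> 'v" where
  "kmap m v0 u = snd (run m (v0, v0) (SOME p. wf v0 p \<and> last (v0 # p) = u))"

lemma good0: "m permutes X \<Longrightarrow> v0 \<in> VX \<Longrightarrow> good m (v0, v0)"
  unfolding good_def
proof (intro conjI allI impI)
  fix u u' assume m: "m permutes X" and v: "v0 \<in> VX" and e: "E u (fst (v0, v0))" "E u' (snd (v0, v0))"
  have "c (u, v0) \<in> Y" using col_in[of u v0] colset_VY[of u] part_flip[of u v0] e v by auto
  then show "c (u', snd (v0, v0)) = m (c (u, fst (v0, v0)))" using incol[of u v0 u'] e m_Y[OF m] by simp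
qed simp

lemma kmap_walk:
  assumes m: "m permutes X" and v: "v0 \<in> VX" and p: "wf v0 p"
  shows "kmap m v0 (last (v0 # p)) = snd (run m (v0, v0) p)"
proof -
  define q where "q = (SOME q. wf v0 q \<and> last (v0 # q) = last (v0 # p))"
  have "wf v0 q \<and> last (v0 # q) = last (v0 # p)" unfolding q_def by (rule someI[of _ p]) (simp add: p)
  then have "run m (v0, v0) q = run m (v0, v0) p" using run_unique[OF m good0[OF m v]] p by metis
  then show ?thesis unfolding kmap_def q_def[symmetric] by simp
qed

lemma kmap_good:
  assumes m: "m permutes X" and v: "v0 \<in> VX"
  shows "good m (u, kmap m v0 u)"
proof -
  obtain p where p: "wf v0 p" "last (v0 # p) = u" using conn_walk by blast
  have "good m (run m (v0, v0) p) \<and> fst (run m (v0, v0) p) = u"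
    using run_good[OF m good0[OF m v]] p by simp
  moreover have "kmap m v0 u = snd (run m (v0, v0) p)" using kmap_walk[OF m v p(1)] p(2) by simp
  ultimately show ?thesis by (metis prod.collapse)
qed

lemma kmap_v0: "m permutes X \<Longrightarrow> v0 \<in> VX \<Longrightarrow> kmap m v0 v0 = v0"
  using kmap_walk[of m v0 "[]"] by simp

lemma kmap_edge:
  assumes m: "m permutes X" and v: "v0 \<in> VX" and e: "E u w"
  shows "E (kmap m v0 u) (kmap m v0 w) \<and> c (kmap m v0 u, kmap m v0 w) = m (c (u, w))"
proof -
  obtain p where p: "wf v0 p" "last (v0 # p) = u" using conn_walk by blast
  have r: "good m (run m (v0, v0) p) \<and> fst (run m (v0, v0) p) = u"
    using run_good[OF m good0[OF m v]] p by simp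
  have ku: "kmap m v0 u = snd (run m (v0, v0) p)" using kmap_walk[OF m v p(1)] p(2) by simp
  have p2: "wf v0 (p @ [w])" using p e by (simp add: wf_append)
  have kw: "kmap m v0 w = snd (step m (run m (v0, v0) p) w)"
    using kmap_walk[OF m v p2] by (simp add: run_append)
  show ?thesis using step_good[OF m, of "run m (v0, v0) p" w] r e ku kw by simp
qed

lemma kmap_inv:
  assumes m: "m permutes X" and v: "v0 \<in> VX"
  shows "kmap (inv m) v0 (kmap m v0 u) = u"
proof -
  have mi: "inv m permutes X" using permutes_inv[OF m] .
  obtain p where p: "wf v0 p" "last (v0 # p) = u" using conn_walk by blast
  have "kmap (inv m) v0 (kmap m v0 (last (v0 # p))) = last (v0 # p)"
  proof (rule walk_induct[OF p(1)])
    show "kmap (inv m) v0 (kmap m v0 v0) = v0" using kmap_v0[OF m v] kmap_v0[OF mi v] by simp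
  next
    fix x w assume h: "kmap (inv m) v0 (kmap m v0 x) = x" and e: "E x w"
    have e1: "E (kmap m v0 x) (kmap m v0 w) \<and> c (kmap m v0 x, kmap m v0 w) = m (c (x, w))"
      using kmap_edge[OF m v e] .
    have e2: "E x (kmap (inv m) v0 (kmap m v0 w)) \<and> c (x, kmap (inv m) v0 (kmap m v0 w)) = c (x, w)"
      using kmap_edge[OF mi v e1[THEN conjunct1]] e1 h permutes_inverses(2)[OF m] by simp
    show "kmap (inv m) v0 (kmap m v0 w) = w" using col_inj e2 e by blast
  qed
  then show ?thesis using p(2) by simp
qed

lemma kmap_aut:
  assumes m: "m permutes X" and v: "v0 \<in> VX"
  shows "is_aut E (kmap m v0)" "kmap m v0 ` VX = VX"
    "\<And>u w. E u w \<Longrightarrow> c (kmap m v0 u, kmap m v0 w) = m (c (u, w))"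
proof -
  have mi: "inv m permutes X" using permutes_inv[OF m] .
  have i1: "\<And>u. kmap (inv m) v0 (kmap m v0 u) = u" using kmap_inv[OF m v] .
  have i2: "\<And>u. kmap m v0 (kmap (inv m) v0 u) = u"
    using kmap_inv[OF mi v] permutes_inv_inv[OF m] by simp
  have bij: "bij (kmap m v0)" using i1 i2 by (metis bij_betw_byWitness subset_UNIV)
  have "\<And>u w. E u w \<longleftrightarrow> E (kmap m v0 u) (kmap m v0 w)"
    using kmap_edge[OF m v] kmap_edge[OF mi v] i1 by metis
  then show "is_aut E (kmap m v0)" unfolding is_aut_def using bij by blast
  have part: "\<And>u. kmap m v0 u \<in> VX \<longleftrightarrow> u \<in> VX" using kmap_good[OF m v] unfolding good_def by simp
  show "kmap m v0 ` VX = VX"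
  proof
    show "kmap m v0 ` VX \<subseteq> VX" using part by blast
    show "VX \<subseteq> kmap m v0 ` VX"
    proof
      fix u assume "u \<in> VX"
      then have "kmap (inv m) v0 u \<in> VX" using part[of "kmap (inv m) v0 u"] i2 by simp
      then show "u \<in> kmap m v0 ` VX" using i2[of u] by (metis image_eqI)
    qed
  qed
  show "\<And>u w. E u w \<Longrightarrow> c (kmap m v0 u, kmap m v0 w) = m (c (u, w))" using kmap_edge[OF m v] by blast
qed

end

lemma la_val:
  assumes b: "bij_betw c (out_arcs E u) S" and x: "x \<in> S"
  shows "\<exists>w. E u w \<and> c (u, w) = x \<and> local_action E c S g u x = c (g u, g w)"
proof -
  have xi: "x \<in> c ` out_arcs E u" using b x unfolding bij_betw_def by simp
  define a where "a = inv_into (out_arcs E u) c x"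
  have a: "a \<in> out_arcs E u" "c a = x" using inv_into_into[OF xi] f_inv_into_f[OF xi] a_def by auto
  then obtain w where w: "a = (u, w)" "E u w" unfolding out_arcs_def by blast
  show ?thesis using a w x unfolding local_action_def a_def[symmetric] arc_map_def by auto
qed

lemma la_arc:
  assumes b: "bij_betw c (out_arcs E u) S" and e: "E u w"
  shows "local_action E c S g u (c (u, w)) = c (g u, g w)"
proof -
  have "c (u, w) \<in> S" using b e unfolding bij_betw_def out_arcs_def by auto
  then obtain w' where w': "E u w'" "c (u, w') = c (u, w)" "local_action E c S g u (c (u, w)) = c (g u, g w')"
    using la_val[OF b] by blast
  have "(u, w') = (u, w)" using bij_betw_imp_inj_on[OF b] w'(1,2) e unfolding inj_on_def out_arcs_def by blast
  then show ?thesis using w' by simp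
qed

theorem lemma3p10:
  fixes E :: "'v \<Rightarrow> 'v \<Rightarrow> bool" and VX VY :: "'v set"
    and X Y :: "'a set" and c :: "'v \<times> 'v \<Rightarrow> 'a"
    and M N :: "('a \<Rightarrow> 'a) set" and v1 v2 w1 w2 :: 'v
  assumes "X \<inter> Y = {}"
    and "\<exists>a b. a \<in> X \<and> b \<in> X \<and> a \<noteq> b"
    and "\<exists>a b. a \<in> Y \<and> b \<in> Y \<and> a \<noteq> b"
    and "perm_group_on X M" and "M \<noteq> {id}"
    and "perm_group_on Y N" and "N \<noteq> {id}"
    and "is_tree E"
    and "VX \<inter> VY = {}" and "VX \<union> VY = UNIV"
    and "\<forall>u w. E u w \<longrightarrow> (u \<in> VX \<and> w \<in> VY) \<or> (u \<in> VY \<and> w \<in> VX)"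
    and "legal_colouring E VX VY X Y c"
    and "v1 \<in> VX" and "v2 \<in> VX" and "w1 \<in> VY" and "w2 \<in> VY"
    and "E v1 w1" and "E v2 w2"
  shows "(\<exists>g\<in>U_c E VX VY X Y c M N. g ` {v1, w1} = {v2, w2}) \<longleftrightarrow>
         ((\<exists>g\<in>U_c E VX VY X Y c M N. g v1 = v2) \<and> (\<exists>g\<in>U_c E VX VY X Y c M N. g w1 = w2))"
proof -
  interpret T: tree_col E VX VY X Y c
    using assms by unfold_locales auto
  have Mg: "perm_group_on X M" and VXY: "VX \<inter> VY = {}" "VX \<union> VY = UNIV"
    and lc: "legal_colouring E VX VY X Y c"
    and v1: "v1 \<in> VX" and v2: "v2 \<in> VX" and w1: "w1 \<in> VY" and w2: "w2 \<in> VY"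
    and e1: "E v1 w1" and e2: "E v2 w2" and XY: "X \<inter> Y = {}" using assms by auto
  have outX: "\<And>u. u \<in> VX \<Longrightarrow> bij_betw c (out_arcs E u) X" using lc unfolding legal_colouring_def by blast
  have outY: "\<And>u. u \<in> VY \<Longrightarrow> bij_betw c (out_arcs E u) Y" using lc unfolding legal_colouring_def by blast
  let ?U = "U_c E VX VY X Y c M N"
  have pres: "\<And>g u. g \<in> ?U \<Longrightarrow> (g u \<in> VX \<longleftrightarrow> u \<in> VX)"
  proof -
    fix g u assume g: "g \<in> ?U"
    then have "bij g" "g ` VX = VX" unfolding U_c_def is_aut_def by auto
    then show "g u \<in> VX \<longleftrightarrow> u \<in> VX" by (metis bij_is_inj inj_image_mem_iff)
  qed
  show ?thesis
  proof
    assume "\<exists>g\<in>?U. g ` {v1, w1} = {v2, w2}"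
    then obtain g where g: "g \<in> ?U" "g ` {v1, w1} = {v2, w2}" by blast
    have "g v1 \<in> VX" "g w1 \<notin> VX" using pres[OF g(1)] v1 w1 VXY by auto
    then have "g v1 = v2" "g w1 = w2" using g(2) w2 v2 VXY by auto
    then show "(\<exists>g\<in>?U. g v1 = v2) \<and> (\<exists>g\<in>?U. g w1 = w2)" using g(1) by blast
  next
    assume "(\<exists>g\<in>?U. g v1 = v2) \<and> (\<exists>g\<in>?U. g w1 = w2)"
    then obtain g h where g: "g \<in> ?U" "g v1 = v2" and h: "h \<in> ?U" "h w1 = w2" by blast
    have ga: "is_aut E g" "g ` VX = VX" "\<And>u. u \<in> VX \<Longrightarrow> local_action E c X g u \<in> M"
      "\<And>u. u \<in> VY \<Longrightarrow> local_action E c Y g u \<in> N" using g(1) unfolding U_c_def by auto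
    have ha: "is_aut E h" "local_action E c X h v1 \<in> M" using h(1) v1 unfolding U_c_def by auto
    define \<gamma> where "\<gamma> = local_action E c X g v1"
    define \<mu> where "\<mu> = local_action E c X h v1"
    have gM: "\<gamma> \<in> M" using ga(3)[OF v1] \<gamma>_def by simp
    have hM: "\<mu> \<in> M" using ha(2) \<mu>_def by simp
    have gE: "E v2 (g w1)" using ga(1) e1 g(2) unfolding is_aut_def by metis
    have hE: "E (h v1) w2" using ha(1) e1 h(2) unfolding is_aut_def by metis
    have gx: "\<gamma> (c (v1, w1)) = c (v2, g w1)" using la_arc[OF outX[OF v1] e1] \<gamma>_def g(2) by simp
    have hx: "\<mu> (c (v1, w1)) = c (v2, w2)"
      using la_arc[OF outX[OF v1] e1] \<mu>_def h(2) T.incol[OF hE e2] by simp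
    define m where "m = \<mu> \<circ> inv \<gamma>"
    have mM: "m \<in> M" using Mg gM hM unfolding perm_group_on_def m_def by blast
    have m: "m permutes X" using Mg mM unfolding perm_group_on_def by blast
    have gperm: "\<gamma> permutes X" using Mg gM unfolding perm_group_on_def by blast
    have mx: "m (c (v2, g w1)) = c (v2, w2)"
      using gx hx permutes_inverses(2)[OF gperm] unfolding m_def by (metis comp_apply)
    define k where "k = T.kmap m v2"
    have ka: "is_aut E k" "k ` VX = VX" "\<And>u w. E u w \<Longrightarrow> c (k u, k w) = m (c (u, w))"
      using T.kmap_aut[OF m v2] unfolding k_def by auto
    have k2: "k v2 = v2" using T.kmap_v0[OF m v2] k_def by simp
    have kE: "E (k v2) (k (g w1))" using ka(1) gE unfolding is_aut_def by blast
    have "c (v2, k (g w1)) = c (v2, w2)" using ka(3)[OF gE] k2 mx by simp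
    then have kw: "k (g w1) = w2" using T.col_inj[of v2 "k (g w1)" w2] kE k2 e2 by simp
    define f where "f = k \<circ> g"
    have fimg: "f ` {v1, w1} = {v2, w2}" using kw k2 g(2) f_def by auto
    have fa: "is_aut E f" using ka(1) ga(1) unfolding is_aut_def f_def by (auto intro: bij_comp)
    have fVX: "f ` VX = VX" using ka(2) ga(2) f_def by (metis image_comp)
    have laf: "\<And>u S. bij_betw c (out_arcs E u) S \<Longrightarrow> x \<in> S \<Longrightarrow>
         local_action E c S f u x = m (local_action E c S g u x)" for x
    proof -
      fix u S assume b: "bij_betw c (out_arcs E u) S" and x: "x \<in> S"
      obtain w where w: "E u w" "c (u, w) = x" using la_val[OF b x] by blast
      have "E (g u) (g w)" using ga(1) w(1) unfolding is_aut_def by blast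
      then show "local_action E c S f u x = m (local_action E c S g u x)"
        using la_arc[OF b w(1), of f] la_arc[OF b w(1), of g] ka(3) w(2) f_def by simp
    qed
    have fM: "local_action E c X f u \<in> M" if u: "u \<in> VX" for u
    proof -
      have "local_action E c X f u = m \<circ> local_action E c X g u"
      proof
        fix x show "local_action E c X f u x = (m \<circ> local_action E c X g u) x"
        proof (cases "x \<in> X")
          case True then show ?thesis using laf[OF outX[OF u] True] by simp
        next
          case False then show ?thesis unfolding local_action_def using permutes_not_in[OF m False] by simp
        qed
      qed
      then show ?thesis using mM ga(3)[OF u] Mg unfolding perm_group_on_def by simp
    qed
    have fN: "local_action E c Y f u \<in> N" if u: "u \<in> VY" for u
    proof -
      have gu: "g u \<in> VY" using pres[OF g(1), of u] u VXY by auto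
      have "local_action E c Y f u = local_action E c Y g u"
      proof
        fix x show "local_action E c Y f u x = local_action E c Y g u x"
        proof (cases "x \<in> Y")
          case True
          obtain w where w: "E u w" "c (u, w) = x" using la_val[OF outY[OF u] True] by blast
          have "E (g u) (g w)" using ga(1) w(1) unfolding is_aut_def by blast
          then have "c (g u, g w) \<in> Y" using outY[OF gu] unfolding bij_betw_def out_arcs_def by auto
          moreover have "local_action E c Y g u x = c (g u, g w)" using la_arc[OF outY[OF u] w(1)] w(2) by simp
          ultimately show ?thesis using laf[OF outY[OF u] True] T.m_Y[OF m] by simp
        next
          case False then show ?thesis unfolding local_action_def by simp
        qed
      qed
      then show ?thesis using ga(4)[OF u] by simp
    qed
    have "f \<in> ?U" unfolding U_c_def using fa fVX fM fN by blast
    then show "\<exists>g\<in>?U. g ` {v1, w1} = {v2, w2}" using fimg by blast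
  qed
qed

end
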